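(* Let $Q=ABCD$ be a non-degenerate trapezoid of perimeter $2$, i.e. a convex quadrangle with $AB\parallel CD$, and let $Q^\circ=KLMN$ be its dual. Then $KL\parallel MN$; in particular $Q^\circ$ is a trapezoid.
   Context: Identify $\mathbb{R}^2$ with $\mathbb{C}$. A quadrangle $Q=ABCD$ is an ordered 4-tuple of points $A,B,C,D\in\mathbb{C}$: $A$ is the first vertex and the order $A\to B\to C\to D\to A$ is the direction of traversal. Its edge vectors are $z_1=B-A$, $z_2=C-B$, $z_3=D-C$, $z_4=A-D$, so $z_1+z_2+z_3+z_4=0$; its perimeter is $|z_1|+|z_2|+|z_3|+|z_4|$. $Q$ is non-degenerate if each pair of consecutive edge vectors $(z_1,z_2),(z_2,z_3),(z_3,z_4),(z_4,z_1)$ consists of nonzero, non-collinear vectors. A non-degenerate quadrangle is convex if no two opposite edges intersect and all its interior angles are less than $\pi$. Associated plane: for a non-degenerate $Q$ of perimeter $2$, choose $u_1,\dots,u_4\in\mathbb{C}$ with $u_k^2=z_k$, where $u_1$ is an arbitrary square root of $z_1$ and for $k=1,2,3$ the sign of $u_{k+1}$ is chosen so that $\operatorname{Im}(\overline{u_k}u_{k+1})$ has the same sign as $\operatorname{Im}(\overline{z_k}z_{k+1})$. Write $u_k=a_k+i b_k$ and $\bar a=(a_1,a_2,a_3,a_4)$, $\bar b=(b_1,b_2,b_3,b_4)$; these are orthonormal in $\mathbb{R}^4$. Let $\Pi=\operatorname{span}(\bar a,\bar b)$ and $\Pi^\perp$ its orthogonal complement. Dual quadrangle: choose an orthonormal basis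 $(\bar c,\bar d)$ of $\Pi^\perp$, put $w_k=(c_k+i d_k)^2$; then $\sum_k w_k=0$ and $\sum_k|w_k|=2$. The dual quadrangle $Q^\circ=KLMN$ is the quadrangle with $L-K=w_1$, $M-L=w_2$, $N-M=w_3$, $K-N=w_4$. It is determined up to rotation, reflection and translation. *)

theory Defs
  imports "HOL-Analysis.Analysis"
begin

definition edge :: "complex \<Rightarrow> complex \<Rightarrow> complex \<Rightarrow> complex \<Rightarrow> nat \<Rightarrow> complex" where
  "edge A B C D k = (if k = 1 then B - A else if k = 2 then C - B
                     else if k = 3 then D - C else A - D)"

definition nxt :: "nat \<Rightarrow> nat" where
  "nxt k = k mod 4 + 1"

text \<open>Cross product Im(conj z * w); zero iff z, w are collinear (as real vectors).\<close>
definition cross :: "complex \<Rightarrow> complex \<Rightarrow> real" where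
  "cross z w = Im (cnj z * w)"

definition perimeter :: "complex \<Rightarrow> complex \<Rightarrow> complex \<Rightarrow> complex \<Rightarrow> real" where
  "perimeter A B C D = (\<Sum>k\<in>{1..4}. cmod (edge A B C D k))"

definition nondegenerate :: "complex \<Rightarrow> complex \<Rightarrow> complex \<Rightarrow> complex \<Rightarrow> bool" where
  "nondegenerate A B C D \<longleftrightarrow>
     (\<forall>k\<in>{1..4}. edge A B C D k \<noteq> 0 \<and> edge A B C D (nxt k) \<noteq> 0 \<and>
                  cross (edge A B C D k) (edge A B C D (nxt k)) \<noteq> 0)"

text \<open>Convex: non-degenerate, opposite (closed) edges disjoint, and every interior
  angle less than pi, i.e. the polygon turns in the same direction at every vertex.\<close>
definition convex_quad :: "complex \<Rightarrow> complex \<Rightarrow> complex \<Rightarrow> complex \<Rightarrow> bool" where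
  "convex_quad A B C D \<longleftrightarrow> nondegenerate A B C D \<and>
     closed_segment A B \<inter> closed_segment C D = {} \<and>
     closed_segment B C \<inter> closed_segment D A = {} \<and>
     ((\<forall>k\<in>{1..4}. cross (edge A B C D k) (edge A B C D (nxt k)) > 0) \<or>
      (\<forall>k\<in>{1..4}. cross (edge A B C D k) (edge A B C D (nxt k)) < 0))"

definition assoc_roots :: "(nat \<Rightarrow> complex) \<Rightarrow> (nat \<Rightarrow> complex) \<Rightarrow> bool" where
  "assoc_roots z u \<longleftrightarrow> (\<forall>k\<in>{1..4}. (u k)\<^sup>2 = z k) \<and>
     (\<forall>k\<in>{1..3}. sgn (cross (u k) (u (k+1))) = sgn (cross (z k) (z (k+1))))"

text \<open>w_1..w_4 are edge vectors of a dual quadrangle of the quadrangle with edge vectors z: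
  for some admissible choice of roots u (giving a = Re u, b = Im u spanning Pi) and some
  orthonormal basis (c, d) of the orthogonal complement of Pi in R^4,
  w_k = (c_k + i d_k)^2.\<close>
definition dual_edges :: "(nat \<Rightarrow> complex) \<Rightarrow> (nat \<Rightarrow> complex) \<Rightarrow> bool" where
  "dual_edges z w \<longleftrightarrow> (\<exists>u c d. assoc_roots z u \<and>
     (\<Sum>k\<in>{1..4}. c k * c k) = 1 \<and> (\<Sum>k\<in>{1..4}. d k * d k) = 1 \<and>
     (\<Sum>k\<in>{1..4}. c k * d k) = 0 \<and>
     (\<Sum>k\<in>{1..4}. c k * Re (u k)) = 0 \<and> (\<Sum>k\<in>{1..4}. c k * Im (u k)) = 0 \<and>
     (\<Sum>k\<in>{1..4}. d k * Re (u k)) = 0 \<and> (\<Sum>k\<in>{1..4}. d k * Im (u k)) = 0 \<and>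
     (\<forall>k\<in>{1..4}. w k = (Complex (c k) (d k))\<^sup>2))"

end

theory Submission
  imports Defs
begin

lemma s4: "(\<Sum>k\<in>{1..4::nat}. f k) = f 1 + f 2 + f 3 + f 4"
  by (simp add: numeral_eq_Suc atLeastAtMostSuc_conv add.commute add.left_commute)

lemma rows_orth:
  fixes a b c d :: "nat \<Rightarrow> real"
  assumes "(\<Sum>k\<in>{1..4}. a k * a k) = 1" "(\<Sum>k\<in>{1..4}. b k * b k) = 1"
    "(\<Sum>k\<in>{1..4}. c k * c k) = 1" "(\<Sum>k\<in>{1..4}. d k * d k) = 1"
    "(\<Sum>k\<in>{1..4}. a k * b k) = 0" "(\<Sum>k\<in>{1..4}. c k * d k) = 0"
    "(\<Sum>k\<in>{1..4}. c k * a k) = 0" "(\<Sum>k\<in>{1..4}. c k * b k) = 0"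
    "(\<Sum>k\<in>{1..4}. d k * a k) = 0" "(\<Sum>k\<in>{1..4}. d k * b k) = 0"
  shows "a 1 * a 3 + b 1 * b 3 + c 1 * c 3 + d 1 * d 3 = 0"
proof -
  define idx :: "4 \<Rightarrow> nat" where "idx i = (if i = 1 then 1 else if i = 2 then 2 else if i = 3 then 3 else 4)" for i
  define V :: "4 \<Rightarrow> nat \<Rightarrow> real" where "V j = (if j = 1 then a else if j = 2 then b else if j = 3 then c else d)" for j
  define Q :: "real^4^4" where "Q = (\<chi> i j. V j (idx i))"
  have ne: "(1::4) \<noteq> 2" "(1::4) \<noteq> 3" "(1::4) \<noteq> 4" "(2::4) \<noteq> 3" "(2::4) \<noteq> 4" "(3::4) \<noteq> 4"
    by simp_all
  note h = assms[unfolded s4]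
  have "transpose Q ** Q = mat 1"
    unfolding vec_eq_iff forall_4 
    apply (simp add: Q_def matrix_matrix_mult_def transpose_def mat_def sum_4 idx_def V_def ne)
    using h by (simp add: algebra_simps)
  then have "Q ** transpose Q = mat 1"
    using orthogonal_matrix orthogonal_matrix_def by blast
  then have "(Q ** transpose Q) $ 1 $ 3 = 0" by (simp add: mat_def ne)
  then show ?thesis
    by (simp add: Q_def matrix_matrix_mult_def transpose_def sum_4 idx_def V_def ne)
qed
lemma key:
  fixes p q x y r s :: real
  assumes "p * s - q * r = 0" "(p * y - q * x) * (x * s - y * r) > 0" "p^2 + q^2 > 0"
  shows "p * r + q * s < 0"
proof -
  define E where "E = p * r + q * s"
  define c where "c = p * y - q * x"
  define d where "d = x * s - y * r"
  define n where "n = p^2 + q^2"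
  have id: "E * c + n * d = (p * x + q * y) * (p * s - q * r)"
    unfolding E_def c_def d_def n_def by (simp add: algebra_simps power2_eq_square)
  then have e: "E * c = - (n * d)" using assms(1) by simp
  have "E * c^2 = (E * c) * c" by (simp add: power2_eq_square)
  also have "... = - n * (c * d)" using e by simp
  also have "... < 0"
  proof -
    have "n > 0" "c * d > 0" using assms unfolding c_def d_def n_def by simp_all
    then have "n * (c * d) > 0" by (rule mult_pos_pos)
    then show ?thesis by simp
  qed
  finally have "E * c^2 < 0" .
  then show ?thesis unfolding E_def[symmetric]
    by (meson mult_nonneg_nonneg not_less zero_le_power2)
qed

lemma Xzero:
  fixes X Y :: real
  assumes "X * Y = 0" "X^2 - Y^2 < 0" shows "X = 0"
proof (rule ccontr)
  assume "X \<noteq> 0"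
  then have "Y = 0" using assms(1) by simp
  then show False using assms(2) by (simp add: not_less)
qed

theorem theorem8p1:
  fixes A B C D K L M N :: complex
  assumes "nondegenerate A B C D"
    and "convex_quad A B C D"
    and "cross (B - A) (D - C) = 0"
    and "perimeter A B C D = 2"
    and "dual_edges (edge A B C D) (edge K L M N)"
  shows "cross (L - K) (N - M) = 0"
proof -
  obtain u c d where ar: "assoc_roots (edge A B C D) u"
    and cc: "(\<Sum>k\<in>{1..4}. c k * c k) = 1" and dd: "(\<Sum>k\<in>{1..4}. d k * d k) = 1"
    and cd: "(\<Sum>k\<in>{1..4}. c k * d k) = 0"
    and ca: "(\<Sum>k\<in>{1..4}. c k * Re (u k)) = 0" and cb: "(\<Sum>k\<in>{1..4}. c k * Im (u k)) = 0"
    and da: "(\<Sum>k\<in>{1..4}. d k * Re (u k)) = 0" and db: "(\<Sum>k\<in>{1..4}. d k * Im (u k)) = 0"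
    and w: "\<forall>k\<in>{1..4}. edge K L M N k = (Complex (c k) (d k))\<^sup>2"
    using assms(5) unfolding dual_edges_def by blast
  have sq: "\<forall>k\<in>{1..4}. (u k)\<^sup>2 = edge A B C D k" using ar unfolding assoc_roots_def by blast
  have z1: "B - A = (u 1)^2" using sq by (auto simp: edge_def)
  have z2: "C - B = (u 2)^2" using sq by (auto simp: edge_def)
  have z3: "D - C = (u 3)^2" using sq by (auto simp: edge_def)
  have z4: "A - D = (u 4)^2" using sq by (auto simp: edge_def)
  define a where "a k = Re (u k)" for k
  define b where "b k = Im (u k)" for k
  have usum: "(u 1)^2 + (u 2)^2 + (u 3)^2 + (u 4)^2 = 0"
    unfolding z1[symmetric] z2[symmetric] z3[symmetric] z4[symmetric] by simp
  have re: "(\<Sum>k\<in>{1..4}. a k * a k - b k * b k) = 0"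
  proof -
    have "Re ((u 1)^2 + (u 2)^2 + (u 3)^2 + (u 4)^2) = 0" using usum by simp
    then show ?thesis unfolding s4 a_def b_def by (simp add: power2_eq_square)
  qed
  have im: "(\<Sum>k\<in>{1..4}. a k * b k) = 0"
  proof -
    have "Im ((u 1)^2 + (u 2)^2 + (u 3)^2 + (u 4)^2) = 0" using usum by simp
    then show ?thesis unfolding s4 a_def b_def by (simp add: power2_eq_square algebra_simps)
  qed
  have nrm: "\<And>z::complex. cmod (z^2) = Re z * Re z + Im z * Im z"
    by (simp only: norm_power cmod_power2) (simp add: power2_eq_square)
  have per: "(\<Sum>k\<in>{1..4}. a k * a k + b k * b k) = 2"
  proof -
    have "cmod (B - A) + cmod (C - B) + cmod (D - C) + cmod (A - D) = 2"
      using assms(4) unfolding perimeter_def s4 by (simp add: edge_def)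
    then show ?thesis unfolding s4 a_def b_def z1 z2 z3 z4 nrm by simp
  qed
  have aa: "(\<Sum>k\<in>{1..4}. a k * a k) = 1" and bb: "(\<Sum>k\<in>{1..4}. b k * b k) = 1"
    using re per unfolding s4 by linarith+
  \<comment> \<open>convexity: z1 and z3 point in opposite directions\<close>
  have conv: "cross (B - A) (C - B) * cross (C - B) (D - C) > 0"
  proof -
    have n1: "nxt 1 = 2" "nxt 2 = 3" by (simp_all add: nxt_def)
    have "(cross (B - A) (C - B) > 0 \<and> cross (C - B) (D - C) > 0) \<or>
          (cross (B - A) (C - B) < 0 \<and> cross (C - B) (D - C) < 0)"
    proof -
      have e1: "edge A B C D 1 = B - A" "edge A B C D 2 = C - B" "edge A B C D 3 = D - C"
        by (simp_all add: edge_def)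
      have m: "(1::nat) \<in> {1..4}" "(2::nat) \<in> {1..4}" by simp_all
      from assms(2) have "(\<forall>k\<in>{1..4}. cross (edge A B C D k) (edge A B C D (nxt k)) > 0) \<or>
      (\<forall>k\<in>{1..4}. cross (edge A B C D k) (edge A B C D (nxt k)) < 0)"
        unfolding convex_quad_def by blast
      then show ?thesis
      proof
        assume h: "\<forall>k\<in>{1..4}. cross (edge A B C D k) (edge A B C D (nxt k)) > 0"
        show ?thesis using h[rule_format, OF m(1)] h[rule_format, OF m(2)] unfolding n1 e1 by blast
      next
        assume h: "\<forall>k\<in>{1..4}. cross (edge A B C D k) (edge A B C D (nxt k)) < 0"
        show ?thesis using h[rule_format, OF m(1)] h[rule_format, OF m(2)] unfolding n1 e1 by blast
      qed
    qed
    then show ?thesis by (auto intro: mult_pos_pos mult_neg_neg)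
  qed
  have nz: "B - A \<noteq> 0" using assms(1) unfolding nondegenerate_def by (force simp: edge_def)
  have neg: "Re (B - A) * Re (D - C) + Im (B - A) * Im (D - C) < 0"
  proof (rule key[where y = "Im (C - B)" and x = "Re (C - B)"])
    show "Re (B - A) * Im (D - C) - Im (B - A) * Re (D - C) = 0"
      using assms(3) by (simp add: cross_def algebra_simps)
    show "(Re (B - A) * Im (C - B) - Im (B - A) * Re (C - B)) *
          (Re (C - B) * Im (D - C) - Im (C - B) * Re (D - C)) > 0"
      using conv by (simp add: cross_def algebra_simps)
    show "(Re (B - A))^2 + (Im (B - A))^2 > 0"
      using nz by (simp add: complex_eq_iff sum_power2_gt_zero_iff)
  qed
  define X where "X = a 1 * a 3 + b 1 * b 3"
  define Y where "Y = a 1 * b 3 - b 1 * a 3"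
  have XY: "X * Y = 0"
  proof -
    have "Re (B - A) * Im (D - C) - Im (B - A) * Re (D - C) = 0"
      using assms(3) by (simp add: cross_def algebra_simps)
    then show ?thesis unfolding z1 z3 X_def Y_def a_def b_def
      by (simp add: power2_eq_square algebra_simps)
  qed
  have X2: "X^2 - Y^2 < 0"
  proof -
    have "X^2 - Y^2 = Re (B - A) * Re (D - C) + Im (B - A) * Im (D - C)"
      unfolding z1 z3 X_def Y_def a_def b_def by (simp add: power2_eq_square algebra_simps)
    then show ?thesis using neg by simp
  qed
  have X0: "X = 0" using Xzero[OF XY X2] .
  have row: "a 1 * a 3 + b 1 * b 3 + c 1 * c 3 + d 1 * d 3 = 0"
    apply (rule rows_orth[OF aa bb cc dd im cd])
    using ca cb da db unfolding a_def b_def by simp_all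
  have cd0: "c 1 * c 3 + d 1 * d 3 = 0" using row X0 unfolding X_def by simp
  have "L - K = (Complex (c 1) (d 1))\<^sup>2" using w[rule_format, of 1] by (simp add: edge_def)
  moreover have "N - M = (Complex (c 3) (d 3))\<^sup>2" using w[rule_format, of 3] by (simp add: edge_def)
  ultimately have "cross (L - K) (N - M) = 2 * (c 1 * c 3 + d 1 * d 3) * (c 1 * d 3 - d 1 * c 3)"
    by (simp add: cross_def power2_eq_square algebra_simps)
  then show ?thesis using cd0 by simp
qed

end
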